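(* Let $a>b\geq c>d>0$ be real numbers and define $g:\mathbb{R}\to\mathbb{R}$ by $$g(x)=\ln\frac{a^x-b^x}{c^x-d^x}\quad (x\neq 0),\qquad g(0)=\ln\frac{\ln(a/b)}{\ln(c/d)}.$$ Then $g$ is strictly convex on $\mathbb{R}$ if $ad-bc>0$, and strictly concave on $\mathbb{R}$ if $ad-bc<0$. If $ad-bc=0$, then $g$ is a linear function (namely $g(x)=x\ln\frac{b}{d}$).
   Context: The value $g(0)$ is the continuous extension of the expression $\ln\frac{a^x-b^x}{c^x-d^x}$ at $x=0$. *)

theory Defs
  imports "HOL-Analysis.Analysis"
begin

definition strict_convex_on :: "real set \<Rightarrow> (real \<Rightarrow> real) \<Rightarrow> bool" where
  "strict_convex_on S f \<longleftrightarrow> convex S \<and>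
     (\<forall>x\<in>S. \<forall>y\<in>S. \<forall>u. x \<noteq> y \<and> 0 < u \<and> u < 1 \<longrightarrow>
        f (u * x + (1 - u) * y) < u * f x + (1 - u) * f y)"

definition strict_concave_on :: "real set \<Rightarrow> (real \<Rightarrow> real) \<Rightarrow> bool" where
  "strict_concave_on S f \<longleftrightarrow> strict_convex_on S (\<lambda>x. - f x)"

definition gfun :: "real \<Rightarrow> real \<Rightarrow> real \<Rightarrow> real \<Rightarrow> real \<Rightarrow> real" where
  "gfun a b c d x =
     (if x = 0 then ln (ln (a / b) / ln (c / d))
      else ln ((a powr x - b powr x) / (c powr x - d powr x)))"

end

theory Submission
  imports Defs
begin

definition Sf :: "real \<Rightarrow> real" where "Sf v = (if v = 0 then 1 else sinh v / v)"

lemma Sf_pos: "Sf v > 0"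
  unfolding Sf_def
  by (cases "v > 0"; cases "v < 0") (auto simp: divide_pos_pos divide_neg_neg)

lemma Sf_even: "Sf (- v) = Sf v"
  unfolding Sf_def by auto

lemma Sf_cont: "isCont Sf v"
proof (cases "v = 0")
  case True
  have "DERIV sinh 0 :> cosh 0" by (rule derivative_eq_intros refl)+ simp
  then have "((\<lambda>h. (sinh (0 + h) - sinh 0) / h) \<longlongrightarrow> (1::real)) (at 0)"
    unfolding DERIV_def by simp
  then have "((\<lambda>v. sinh v / v) \<longlongrightarrow> (1::real)) (at 0)" by simp
  then have "(Sf \<longlongrightarrow> 1) (at 0)"
    by (rule Lim_transform_eventually) (auto simp: Sf_def eventually_at_filter)
  then show ?thesis using True by (simp add: isCont_def Sf_def)
next
  case False
  have c: "isCont (\<lambda>v. sinh v / v) v" using False by (intro continuous_intros) auto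
  have e: "\<forall>\<^sub>F w in nhds v. sinh w / w = Sf w"
    using eventually_nhds_in_open[of "-{0}" v] False
    by (auto elim!: eventually_mono simp: Sf_def)
  show ?thesis using isCont_cong[OF e] c by simp
qed

lemma hpos1: "v > 0 \<Longrightarrow> v * cosh v - sinh v > (0::real)"
proof -
  assume v: "v > 0"
  have "(\<lambda>v. v * cosh v - sinh v) 0 < (\<lambda>v. v * cosh v - sinh v) v"
  proof (rule DERIV_pos_imp_increasing_open[OF v])
    fix x :: real assume x: "0 < x" "x < v"
    have "DERIV (\<lambda>v. v * cosh v - sinh v) x :> x * sinh x"
      by (rule derivative_eq_intros refl)+ simp
    then show "\<exists>y. DERIV (\<lambda>v. v * cosh v - sinh v) x :> y \<and> 0 < y" using x by auto
  qed (intro continuous_intros)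
  then show ?thesis by simp
qed

lemma hpos2: "v > 0 \<Longrightarrow> sinh v * cosh v - v > (0::real)"
proof -
  assume v: "v > 0"
  have "(\<lambda>v. sinh v * cosh v - v) 0 < (\<lambda>v. sinh v * cosh v - v) v"
  proof (rule DERIV_pos_imp_increasing_open[OF v])
    fix x :: real assume x: "0 < x" "x < v"
    have "DERIV (\<lambda>v. sinh v * cosh v - v) x :> 2 * sinh x ^ 2"
      by (rule derivative_eq_intros refl)+ (smt (verit) cosh_square_eq power2_eq_square)
    then show "\<exists>y. DERIV (\<lambda>v. sinh v * cosh v - v) x :> y \<and> 0 < y" using x by auto
  qed (intro continuous_intros)
  then show ?thesis by simp
qed

lemma aux_hyp: "sinh (A::real) * r * r * sinh A - r * cosh A * (cosh A * r) = - (r ^ 2)"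
proof -
  have 1: "sinh A * r * r * sinh A - r * cosh A * (cosh A * r) = r^2 * (sinh A ^2 - cosh A ^2)"
    by (simp add: power2_eq_square algebra_simps)
  have 2: "sinh A ^2 - cosh A ^2 = -1" using hyperbolic_pythagoras[of A] by linarith
  show ?thesis using 1 2 by simp
qed

lemma m_deriv: "(z::real) > 0 \<Longrightarrow> DERIV (\<lambda>v. v * cosh v / sinh v) z :> (sinh z * cosh z - z) / sinh z^2"
  apply (rule DERIV_cong)
   apply (rule derivative_eq_intros refl | simp)+
proof -
  have h: "cosh z * cosh z = sinh z * sinh z + 1" using cosh_square_eq[of z] by (simp add: power2_eq_square)
  have "(cosh z + sinh z * z) * sinh z - z * cosh z * cosh z = sinh z * cosh z - z"
    by (simp add: algebra_simps h)
  then show "((cosh z + sinh z * z) * sinh z - z * cosh z * cosh z) / (sinh z * sinh z) =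
     (sinh z * cosh z - z) / (sinh z)\<^sup>2" by (simp add: power2_eq_square)
qed

lemma S_deriv: "(z::real) > 0 \<Longrightarrow> DERIV (\<lambda>v. sinh v / v) z :> (z * cosh z - sinh z) / z^2"
  apply (rule DERIV_cong)
   apply (rule derivative_eq_intros refl | simp)+
  by (simp add: power2_eq_square mult.commute)

lemma Sf_mono: fixes x y :: real assumes "0 < x" "x < y" shows "sinh x / x < sinh y / y"
proof -
  have "(\<lambda>v. sinh v / v) x < (\<lambda>v. sinh v / v) y"
  proof (rule DERIV_pos_imp_increasing_open[OF assms(2)])
    fix z :: real assume z: "x < z" "z < y"
    have "DERIV (\<lambda>v. sinh v / v) z :> (z * cosh z - sinh z) / z^2"
      using S_deriv[of z] z assms by simp
    moreover have "(z * cosh z - sinh z) / z^2 > 0" using hpos1[of z] z assms by simp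
    ultimately show "\<exists>d. DERIV (\<lambda>v. sinh v / v) z :> d \<and> 0 < d" by blast
  next
    show "continuous_on {x..y} (\<lambda>v. sinh v / v)" using assms by (intro continuous_intros) auto
  qed
  then show ?thesis by simp
qed

lemma m_mono: fixes x y :: real assumes "0 < x" "x < y" shows "x * cosh x / sinh x < y * cosh y / sinh y"
proof -
  have "(\<lambda>v. v * cosh v / sinh v) x < (\<lambda>v. v * cosh v / sinh v) y"
  proof (rule DERIV_pos_imp_increasing_open[OF assms(2)])
    fix z :: real assume z: "x < z" "z < y"
    have "DERIV (\<lambda>v. v * cosh v / sinh v) z :> (sinh z * cosh z - z) / sinh z^2"
      using m_deriv[of z] z assms by simp
    moreover have "(sinh z * cosh z - z) / sinh z^2 > 0" using hpos2[of z] z assms by simp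
    ultimately show "\<exists>d. DERIV (\<lambda>v. v * cosh v / sinh v) z :> d \<and> 0 < d" by blast
  next
    show "continuous_on {x..y} (\<lambda>v. v * cosh v / sinh v)" using assms by (intro continuous_intros) auto
  qed
  then show ?thesis by simp
qed

definition FF :: "real \<Rightarrow> real \<Rightarrow> real \<Rightarrow> real" where
  "FF p q y = ln (Sf (p*y)) - ln (Sf (q*y))"

definition DD :: "real \<Rightarrow> real \<Rightarrow> real \<Rightarrow> real" where
  "DD p q y = p * cosh (p*y) / sinh (p*y) - q * cosh (q*y) / sinh (q*y)"

lemma FF_cont: "continuous_on (A::real set) (FF p q)"
proof -
  have c: "isCont (\<lambda>y. Sf (r*y)) y" for r y
    by (rule isCont_o2[OF _ Sf_cont]) (intro continuous_intros)
  have l: "isCont (\<lambda>y. ln (Sf (r*y))) y" for r y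
  proof (rule isCont_ln'[OF c])
    show "Sf (r*y) \<noteq> 0" using Sf_pos[of "r*y"] by linarith
  qed
  have "isCont (FF p q) y" for y
    unfolding FF_def by (rule isCont_diff[OF l l])
  then show ?thesis by (simp add: continuous_at_imp_continuous_on)
qed

lemma G_deriv: "(p::real) > 0 \<Longrightarrow> q > 0 \<Longrightarrow> y > 0 \<Longrightarrow> DERIV (\<lambda>y. ln (sinh (p*y)) - ln (sinh (q*y)) - ln p + ln q) y :> DD p q y"
  apply (rule DERIV_cong)
   apply (rule derivative_eq_intros refl | simp)+
    apply (simp add: DD_def mult.commute)
  done
lemma ln_Sf: assumes r: "r > 0" and z: "z > 0" shows "ln (Sf (r*z)) = ln (sinh (r*z)) - ln r - ln z"
proof -
  have "Sf (r*z) = sinh (r*z) / (r*z)" using r z by (simp add: Sf_def)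
  moreover have "ln (sinh (r*z) / (r*z)) = ln (sinh (r*z)) - ln (r*z)"
    using r z by (intro ln_divide_pos) simp_all
  moreover have "ln (r*z) = ln r + ln z" using r z by (intro ln_mult_pos) simp_all
  ultimately show ?thesis by simp
qed
lemma FF_deriv: assumes "p > 0" "q > 0" "y > 0" shows "DERIV (FF p q) y :> DD p q y"
proof (rule has_field_derivative_transform_within_open[OF G_deriv[OF assms]])
  show "open {0::real<..}" by simp
  show "y \<in> {0<..}" using assms by simp
  fix z :: real assume "z \<in> {0<..}"
  then have z: "z > 0" by simp
  show "ln (sinh (p*z)) - ln (sinh (q*z)) - ln p + ln q = FF p q z"
    unfolding FF_def ln_Sf[OF assms(1) z] ln_Sf[OF assms(2) z] by simp
qed

lemma DD_deriv0: "(p::real) > 0 \<Longrightarrow> q > 0 \<Longrightarrow> y > 0 \<Longrightarrow> DERIV (\<lambda>y. p * cosh (p*y) / sinh (p*y) - q * cosh (q*y) / sinh (q*y)) y :> q^2 / sinh (q*y)^2 - p^2 / sinh (p*y)^2"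
  apply (rule DERIV_cong)
   apply (rule derivative_eq_intros refl | simp)+
  apply (simp only: aux_hyp)
  apply (simp add: power2_eq_square)
  done

lemma DD_deriv: assumes "p > 0" "q > 0" "y > 0"
  shows "DERIV (DD p q) y :> q^2 / sinh (q*y)^2 - p^2 / sinh (p*y)^2"
proof -
  have e: "DD p q = (\<lambda>y. p * cosh (p*y) / sinh (p*y) - q * cosh (q*y) / sinh (q*y))"
    by (rule ext) (simp add: DD_def)
  show ?thesis unfolding e using DD_deriv0[OF assms] .
qed

lemma DD_pos: assumes "p > q" "q > 0" "y > 0" shows "DD p q y > 0"
proof -
  have "q*y * cosh (q*y) / sinh (q*y) < p*y * cosh (p*y) / sinh (p*y)"
    by (rule m_mono) (use assms in auto)
  moreover have "q*y * cosh (q*y) / sinh (q*y) = (q * cosh (q*y) / sinh (q*y)) * y"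
    "p*y * cosh (p*y) / sinh (p*y) = (p * cosh (p*y) / sinh (p*y)) * y" by simp_all
  ultimately have "(q * cosh (q*y) / sinh (q*y)) * y < (p * cosh (p*y) / sinh (p*y)) * y"
    by simp
  then have "q * cosh (q*y) / sinh (q*y) < p * cosh (p*y) / sinh (p*y)"
    using mult_less_cancel_right_pos[OF assms(3)] by blast
  then show ?thesis by (simp add: DD_def)
qed

lemma DD2_pos: fixes p q y :: real assumes "p > q" "q > 0" "y > 0" shows "q^2 / sinh (q*y)^2 - p^2 / sinh (p*y)^2 > 0"
proof -
  have "sinh (q*y) / (q*y) < sinh (p*y) / (p*y)"
    by (rule Sf_mono) (use assms in auto)
  then have "(sinh (q*y) / q / y) * y < (sinh (p*y) / p / y) * y"
    using assms(3) by (intro mult_strict_right_mono) (simp_all add: divide_divide_eq_left)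
  then have 1: "sinh (q*y) / q < sinh (p*y) / p"
    using assms by simp
  have 0: "0 < sinh (q*y) / q" using assms by simp
  have "(sinh (q*y) / q)^2 < (sinh (p*y) / p)^2"
    using 1 0 by (intro power_strict_mono) auto
  then have "inverse ((sinh (p*y) / p)^2) < inverse ((sinh (q*y) / q)^2)"
    using 0 by (intro less_imp_inverse_less) auto
  then show ?thesis by (simp add: power_divide)
qed

lemma DD_mono: assumes "p > q" "q > 0" "0 < y1" "y1 < y2" shows "DD p q y1 < DD p q y2"
proof (rule DERIV_pos_imp_increasing[OF assms(4)])
  fix x assume "y1 \<le> x" "x \<le> y2"
  then have x: "x > 0" using assms by auto
  have "DERIV (DD p q) x :> q^2 / sinh (q*x)^2 - p^2 / sinh (p*x)^2"
    using DD_deriv[where p=p and q=q and y=x] assms x by simp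
  moreover have "q^2 / sinh (q*x)^2 - p^2 / sinh (p*x)^2 > 0"
    using DD2_pos[where p=p and q=q and y=x] assms x by simp
  ultimately show "\<exists>d. DERIV (DD p q) x :> d \<and> 0 < d" by blast
qed

lemma FF_inc: assumes "p > q" "q > 0" "0 \<le> y1" "y1 < y2" shows "FF p q y1 < FF p q y2"
proof (rule DERIV_pos_imp_increasing_open[OF assms(4)])
  fix x assume "y1 < x" "x < y2"
  then have x: "x > 0" using assms by auto
  have "DERIV (FF p q) x :> DD p q x" using FF_deriv[where p=p and q=q and y=x] assms x by simp
  moreover have "DD p q x > 0" using DD_pos[where p=p and q=q and y=x] assms x by simp
  ultimately show "\<exists>d. DERIV (FF p q) x :> d \<and> 0 < d" by blast
qed (rule FF_cont)

lemma FF_conv: assumes "p > q" "q > 0" "0 \<le> x" "x < y" "0 < u" "u < 1"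
  shows "FF p q (u*x + (1-u)*y) < u * FF p q x + (1-u) * FF p q y"
proof -
  define w where "w = u*x + (1-u)*y"
  have e1: "w - x = (1-u)*(y-x)" "y - w = u*(y-x)" unfolding w_def by (simp_all add: algebra_simps)
  have p1: "(1-u)*(y-x) > 0" using assms by (simp add: mult_pos_pos)
  have p2: "u*(y-x) > 0" using assms by (simp add: mult_pos_pos)
  have w1: "x < w" using p1 e1(1) by linarith
  have w2: "w < y" using p2 e1(2) by linarith
  note w = w1 w2
  have diff: "\<And>z. x < z \<Longrightarrow> FF p q differentiable (at z)"
  proof -
    fix z assume "x < z"
    then have z0: "0 < z" using assms by linarith
    have "p > 0" using assms by linarith
    then have "DERIV (FF p q) z :> DD p q z" using FF_deriv assms z0 by blast
    then show "FF p q differentiable (at z)"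
      unfolding real_differentiable_def by (rule exI)
  qed
  have diff2: "\<And>z. w < z \<Longrightarrow> FF p q differentiable (at z)"
  proof -
    fix z assume "w < z" then have "x < z" using w1 by linarith
    then show "FF p q differentiable (at z)" by (rule diff)
  qed
  obtain l1 z1 where z1: "x < z1" "z1 < w" "DERIV (FF p q) z1 :> l1" "FF p q w - FF p q x = (w - x) * l1"
    using MVT[OF w(1) FF_cont, of p q] diff by blast
  obtain l2 z2 where z2: "w < z2" "z2 < y" "DERIV (FF p q) z2 :> l2" "FF p q y - FF p q w = (y - w) * l2"
    using MVT[OF w(2) FF_cont, of p q] diff2 by blast
  have pz1: "0 < z1" using z1 assms by linarith
  have pz2: "0 < z2" using z2 z1 w assms by linarith
  have "l1 = DD p q z1" using DERIV_unique[OF z1(3) FF_deriv[OF _ _ pz1]] assms by linarith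
  moreover have "l2 = DD p q z2" using DERIV_unique[OF z2(3) FF_deriv[OF _ _ pz2]] assms by linarith
  moreover have "DD p q z1 < DD p q z2"
    using DD_mono[OF assms(1,2) pz1] z1 z2 by (meson less_trans)
  ultimately have l: "l1 < l2" by simp
  have A: "FF p q w = FF p q x + (1-u)*(y-x)*l1" using z1(4) unfolding e1(1) by linarith
  have B: "FF p q y = FF p q w + u*(y-x)*l2" using z2(4) unfolding e1(2) by linarith
  have "u * FF p q x + (1-u) * FF p q y - FF p q w = u*(1-u)*(y-x)*(l2 - l1)"
    unfolding B A by (simp add: algebra_simps)
  moreover have "u*(1-u)*(y-x)*(l2 - l1) > 0" using assms l by (intro mult_pos_pos) simp_all
  ultimately have "FF p q w < u * FF p q x + (1-u) * FF p q y" by linarith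
  then show ?thesis unfolding w_def .
qed


lemma even_conv:
  fixes F :: "real \<Rightarrow> real"
  assumes inc: "\<And>a b. 0 \<le> a \<Longrightarrow> a < b \<Longrightarrow> F a < F b"
    and conv: "\<And>x y u. 0 \<le> x \<Longrightarrow> x < y \<Longrightarrow> 0 < u \<Longrightarrow> u < 1 \<Longrightarrow>
                 F (u*x + (1-u)*y) < u * F x + (1-u) * F y"
  shows "strict_convex_on UNIV (\<lambda>x. F \<bar>x\<bar>)"
  unfolding strict_convex_on_def
proof (intro conjI ballI allI impI)
  show "convex (UNIV :: real set)" by simp
  fix x y u :: real
  assume h: "x \<noteq> y \<and> 0 < u \<and> u < 1"
  then have u: "0 < u" "u < 1" and xy: "x \<noteq> y" by auto
  define z where "z = u*x + (1-u)*y"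
  define w where "w = u*\<bar>x\<bar> + (1-u)*\<bar>y\<bar>"
  have zw: "\<bar>z\<bar> \<le> w"
  proof -
    have "\<bar>z\<bar> \<le> \<bar>u*x\<bar> + \<bar>(1-u)*y\<bar>" unfolding z_def by (rule abs_triangle_ineq)
    also have "\<dots> = w" unfolding w_def using u by (simp add: abs_mult)
    finally show ?thesis .
  qed
  have mono: "F \<bar>z\<bar> \<le> F w"
  proof (cases "\<bar>z\<bar> = w")
    case True then show ?thesis by simp
  next
    case False then have "\<bar>z\<bar> < w" using zw by simp
    then show ?thesis using inc[of "\<bar>z\<bar>" w] by simp
  qed
  show "F \<bar>u * x + (1 - u) * y\<bar> < u * F \<bar>x\<bar> + (1 - u) * F \<bar>y\<bar>"
  proof (cases "\<bar>x\<bar> = \<bar>y\<bar>")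
    case False
    have "F w < u * F \<bar>x\<bar> + (1 - u) * F \<bar>y\<bar>"
    proof (cases "\<bar>x\<bar> < \<bar>y\<bar>")
      case True
      then show ?thesis unfolding w_def using conv[of "\<bar>x\<bar>" "\<bar>y\<bar>" u] u by simp
    next
      case False
      then have lt: "\<bar>y\<bar> < \<bar>x\<bar>" using \<open>\<bar>x\<bar> \<noteq> \<bar>y\<bar>\<close> by linarith
      have "F ((1-u)*\<bar>y\<bar> + (1-(1-u))*\<bar>x\<bar>) < (1-u) * F \<bar>y\<bar> + (1-(1-u)) * F \<bar>x\<bar>"
        using conv[of "\<bar>y\<bar>" "\<bar>x\<bar>" "1-u"] u lt by simp
      moreover have "(1-u)*\<bar>y\<bar> + (1-(1-u))*\<bar>x\<bar> = w" unfolding w_def by simp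
      ultimately show ?thesis by simp
    qed
    then show ?thesis using mono unfolding z_def by linarith
  next
    case True
    then have yx: "y = - x" using xy by (auto simp: abs_eq_iff)
    then have x0: "x \<noteq> 0" using xy by auto
    have "z = (2*u - 1) * x" unfolding z_def yx by (simp add: algebra_simps)
    then have "\<bar>z\<bar> = \<bar>2*u - 1\<bar> * \<bar>x\<bar>" by (simp add: abs_mult)
    moreover have "\<bar>2*u - 1\<bar> < 1" using u by auto
    ultimately have "\<bar>z\<bar> < \<bar>x\<bar>" using x0 by (simp add: mult_less_cancel_right2)
    then have "F \<bar>z\<bar> < F \<bar>x\<bar>" using inc[of "\<bar>z\<bar>" "\<bar>x\<bar>"] by simp
    also have "F \<bar>x\<bar> = u * F \<bar>x\<bar> + (1 - u) * F \<bar>y\<bar>" using True by (simp add: algebra_simps)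
    finally show ?thesis unfolding z_def .
  qed
qed

lemma strict_convex_lin:
  assumes "strict_convex_on UNIV f" and "\<And>x. g x = f x + L * x + C"
  shows "strict_convex_on UNIV g"
  using assms(1) unfolding strict_convex_on_def assms(2)
proof (intro conjI ballI allI impI)
  fix x y u :: real
  assume a: "convex (UNIV::real set) \<and> (\<forall>x\<in>UNIV. \<forall>y\<in>UNIV. \<forall>u. x \<noteq> y \<and> 0 < u \<and> u < 1 \<longrightarrow>
           f (u * x + (1 - u) * y) < u * f x + (1 - u) * f y)"
    and h: "x \<noteq> y \<and> 0 < u \<and> u < 1"
  then have "f (u * x + (1 - u) * y) < u * f x + (1 - u) * f y" by blast
  moreover have "L * (u * x + (1 - u) * y) + C = u * (L * x + C) + (1 - u) * (L * y + C)"
    by (simp add: algebra_simps)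
  ultimately show "f (u * x + (1 - u) * y) + L * (u * x + (1 - u) * y) + C
       < u * (f x + L * x + C) + (1 - u) * (f y + L * y + C)" by (simp add: algebra_simps)
qed simp

lemma FF_even: "FF p q (-x) = FF p q x"
  unfolding FF_def using Sf_even[of "p*x"] Sf_even[of "q*x"] by simp

lemma FF_abs: "FF p q \<bar>x\<bar> = FF p q x"
  by (cases "x \<ge> 0") (auto simp: FF_even)

lemma FF_swap: "FF p q x = - FF q p x" unfolding FF_def by simp

lemma FF_strict: assumes "p > q" "q > 0" shows "strict_convex_on UNIV (FF p q)"
proof -
  have "strict_convex_on UNIV (\<lambda>x. FF p q \<bar>x\<bar>)"
    by (rule even_conv) (use FF_inc[OF assms] FF_conv[OF assms] in auto)
  then show ?thesis unfolding FF_abs .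
qed

lemma two_exp_sinh: "exp (xa::real) - exp xb = 2 * exp ((xa + xb)/2) * sinh ((xa - xb)/2)"
proof -
  have "2 * exp ((xa + xb)/2) * sinh ((xa - xb)/2)
      = exp ((xa + xb)/2) * exp ((xa - xb)/2) - exp ((xa + xb)/2) * exp (-((xa - xb)/2))"
    by (simp add: sinh_field_def field_simps)
  also have "\<dots> = exp ((xa + xb)/2 + (xa - xb)/2) - exp ((xa + xb)/2 + -((xa - xb)/2))"
    by (simp only: exp_add)
  also have "\<dots> = exp xa - exp xb" by (simp add: field_simps)
  finally show ?thesis by simp
qed

lemma g_repr:
  fixes a b c d x :: real
  assumes "a > b" "b > 0" "c > d" "d > 0"
  shows "gfun a b c d x = ((ln a + ln b - ln c - ln d)/2) * x
      + ln (((ln a - ln b)/2)/((ln c - ln d)/2)) + FF ((ln a - ln b)/2) ((ln c - ln d)/2) x"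
proof -
  define s where "s = (ln a - ln b)/2"
  define t where "t = (ln c - ln d)/2"
  define L where "L = (ln a + ln b - ln c - ln d)/2"
  have "gfun a b c d x = L * x + ln (s/t) + FF s t x"
  proof -
  have s: "s > 0" unfolding s_def using assms by simp
  have t: "t > 0" unfolding t_def using assms by simp
  show ?thesis
  proof (cases "x = 0")
    case True
    have "ln (a / b) = 2 * s" unfolding s_def using assms by (simp add: ln_divide_pos)
    moreover have "ln (c / d) = 2 * t" unfolding t_def using assms by (simp add: ln_divide_pos)
    ultimately show ?thesis using True by (simp add: gfun_def FF_def)
  next
    case False
    have a0: "a > 0" using assms by simp
    have c0: "c > 0" using assms by simp
    define m1 where "m1 = (x * ln a + x * ln b)/2"
    define m2 where "m2 = (x * ln c + x * ln d)/2"
    have n1: "a powr x - b powr x = 2 * exp m1 * sinh (s*x)"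
      using a0 assms unfolding powr_def m1_def s_def
      by (simp add: two_exp_sinh algebra_simps)
    have n2: "c powr x - d powr x = 2 * exp m2 * sinh (t*x)"
      using c0 assms unfolding powr_def m2_def t_def
      by (simp add: two_exp_sinh algebra_simps)
    have S1: "sinh (s*x) = s*x * Sf (s*x)" using s False by (simp add: Sf_def)
    have S2: "sinh (t*x) = t*x * Sf (t*x)" using t False by (simp add: Sf_def)
    have P1: "Sf (s*x) > 0" "Sf (t*x) > 0" by (rule Sf_pos)+
    have "(a powr x - b powr x) / (c powr x - d powr x) = exp (m1 - m2) * ((s/t) * (Sf (s*x) / Sf (t*x)))"
      unfolding n1 n2 S1 S2 exp_diff using False s t P1 by (simp add: field_simps)
    moreover have "ln (exp (m1 - m2) * ((s/t) * (Sf (s*x) / Sf (t*x))))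
        = (m1 - m2) + (ln (s/t) + (ln (Sf (s*x)) - ln (Sf (t*x))))"
    proof -
      have q1: "s/t > 0" "Sf (s*x) / Sf (t*x) > 0" using s t P1 by simp_all
      have e1: "ln (exp (m1 - m2) * ((s/t) * (Sf (s*x) / Sf (t*x))))
          = ln (exp (m1 - m2)) + ln ((s/t) * (Sf (s*x) / Sf (t*x)))"
        by (rule ln_mult_pos[OF exp_gt_zero mult_pos_pos[OF q1]])
      have e2: "ln ((s/t) * (Sf (s*x) / Sf (t*x))) = ln (s/t) + ln (Sf (s*x) / Sf (t*x))"
        by (rule ln_mult_pos[OF q1])
      have e3: "ln (Sf (s*x) / Sf (t*x)) = ln (Sf (s*x)) - ln (Sf (t*x))"
        using P1 by (intro ln_divide_pos) simp_all
      show ?thesis unfolding e1 e2 e3 by simp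
    qed
    moreover have "m1 - m2 = L * x" unfolding m1_def m2_def L_def by (simp add: field_simps)
    ultimately show ?thesis using False by (simp add: gfun_def FF_def)
  qed
  qed
  then show ?thesis unfolding s_def t_def L_def .
qed

theorem theorem2p1:
  fixes a b c d :: real
  assumes "a > b" and "b \<ge> c" and "c > d" and "d > 0"
  shows "(a * d - b * c > 0 \<longrightarrow> strict_convex_on UNIV (gfun a b c d))
       \<and> (a * d - b * c < 0 \<longrightarrow> strict_concave_on UNIV (gfun a b c d))
       \<and> (a * d - b * c = 0 \<longrightarrow> (\<forall>x. gfun a b c d x = x * ln (b / d)))"
proof -
  have b0: "b > 0" using assms by simp
  define s where "s = (ln a - ln b)/2"
  define t where "t = (ln c - ln d)/2"
  define L where "L = (ln a + ln b - ln c - ln d)/2"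
  have rep: "\<And>x. gfun a b c d x = L * x + ln (s/t) + FF s t x"
    unfolding s_def t_def L_def by (rule g_repr) (use assms b0 in auto)
  have s: "s > 0" unfolding s_def using assms b0 by simp
  have t: "t > 0" unfolding t_def using assms by simp
  have a0: "a > 0" "c > 0" using assms by auto
  have lnad: "ln (a*d) = ln a + ln d" "ln (b*c) = ln b + ln c"
    using assms a0 b0 by (simp_all add: ln_mult_pos)
  have pos: "a*d > 0" "b*c > 0" using assms a0 b0 by simp_all
  have st_iff1: "a * d - b * c > 0 \<longleftrightarrow> s > t"
  proof -
    have "a * d - b * c > 0 \<longleftrightarrow> ln (b*c) < ln (a*d)" using pos by simp
    then show ?thesis unfolding lnad s_def t_def by auto
  qed
  have st_iff2: "a * d - b * c < 0 \<longleftrightarrow> s < t"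
  proof -
    have "a * d - b * c < 0 \<longleftrightarrow> ln (a*d) < ln (b*c)" using pos by simp
    then show ?thesis unfolding lnad s_def t_def by auto
  qed
  have st_iff3: "a * d - b * c = 0 \<longleftrightarrow> s = t"
    using st_iff1 st_iff2 by linarith
  show ?thesis
  proof (intro conjI impI)
    assume "a * d - b * c > 0"
    then have "s > t" using st_iff1 by simp
    have eq: "\<And>x. gfun a b c d x = FF s t x + L * x + ln (s/t)"
      using rep by (simp add: algebra_simps)
    show "strict_convex_on UNIV (gfun a b c d)"
      by (rule strict_convex_lin[OF FF_strict[OF \<open>s > t\<close> t]]) (rule eq)
  next
    assume "a * d - b * c < 0"
    then have "t > s" using st_iff2 by simp
    have eq: "\<And>x. - gfun a b c d x = FF t s x + (-L) * x + (- ln (s/t))"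
      using rep FF_swap[of s t] by (simp add: algebra_simps)
    have "strict_convex_on UNIV (\<lambda>x. - gfun a b c d x)"
      by (rule strict_convex_lin[OF FF_strict[OF \<open>t > s\<close> s]]) (rule eq)
    then show "strict_concave_on UNIV (gfun a b c d)" unfolding strict_concave_on_def .
  next
    assume "a * d - b * c = 0"
    then have st: "s = t" using st_iff3 by simp
    have "L = ln b - ln d" unfolding L_def using st unfolding s_def t_def by simp
    also have "\<dots> = ln (b/d)" using b0 assms by (simp add: ln_divide_pos)
    finally have "L = ln (b/d)" .
    then show "\<forall>x. gfun a b c d x = x * ln (b / d)"
      using rep st t by (simp add: FF_def)
  qed
qed
end
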